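(* Let $M$ be a finite abelian group of odd order and exponent greater than $2$. Then $(K,1)=\{(A,1):A\in K\}$ is the only subloop of $L_M$ of order $4$.
   Context: Let $K=\{1,a,b,c\}$ be the Klein four-group. Set $L_M=K\times M$ with the operation $(A,x)*(B,y)=(AB,xy)$ if $B=1$, and $(A,x)*(B,y)=(AB,x^{-1}y)$ if $B\neq 1$. *)

theory Defs
  imports "HOL-Algebra.Algebra"
begin

datatype klein = K1 | Ka | Kb | Kc

fun kmult :: "klein \<Rightarrow> klein \<Rightarrow> klein" where
  "kmult K1 y = y"
| "kmult x K1 = x"
| "kmult Ka Ka = K1" | "kmult Ka Kb = Kc" | "kmult Ka Kc = Kb"
| "kmult Kb Ka = Kc" | "kmult Kb Kb = K1" | "kmult Kb Kc = Ka"
| "kmult Kc Ka = Kb" | "kmult Kc Kb = Ka" | "kmult Kc Kc = K1"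

definition LM_carrier :: "('a, 'b) monoid_scheme \<Rightarrow> (klein \<times> 'a) set" where
  "LM_carrier M = UNIV \<times> carrier M"

definition LM_mult :: "('a, 'b) monoid_scheme \<Rightarrow> klein \<times> 'a \<Rightarrow> klein \<times> 'a \<Rightarrow> klein \<times> 'a" where
  "LM_mult M p q =
     (if fst q = K1 then (kmult (fst p) (fst q), snd p \<otimes>\<^bsub>M\<^esub> snd q)
      else (kmult (fst p) (fst q), inv\<^bsub>M\<^esub> (snd p) \<otimes>\<^bsub>M\<^esub> snd q))"

definition LM_subloop :: "('a, 'b) monoid_scheme \<Rightarrow> (klein \<times> 'a) set \<Rightarrow> bool" where
  "LM_subloop M H \<longleftrightarrow> H \<subseteq> LM_carrier M \<and> (K1, \<one>\<^bsub>M\<^esub>) \<in> H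
     \<and> (\<forall>x\<in>H. \<forall>y\<in>H. LM_mult M x y \<in> H)
     \<and> (\<forall>x\<in>H. \<forall>y\<in>H. \<exists>z\<in>H. LM_mult M x z = y)
     \<and> (\<forall>x\<in>H. \<forall>y\<in>H. \<exists>z\<in>H. LM_mult M z x = y)"

definition group_exponent :: "('a, 'b) monoid_scheme \<Rightarrow> nat" where
  "group_exponent G = (LEAST n. 0 < n \<and> (\<forall>x\<in>carrier G. x [^]\<^bsub>G\<^esub> n = \<one>\<^bsub>G\<^esub>))"

end

theory Submission
  imports Defs
begin

lemma kmult_eq_left: "kmult A B = A \<Longrightarrow> B = K1"
  by (cases A; cases B; simp)

lemma kmult_self: "kmult A A = K1"
  by (cases A; simp)

lemma kmult_K1_right[simp]: "kmult A K1 = A"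
  by (cases A; simp)

lemma LM_mult_K1: "LM_mult M p (K1, n) = (fst p, snd p \<otimes>\<^bsub>M\<^esub> n)"
  by (simp add: LM_mult_def)

lemma LM_mult_nK1: "B \<noteq> K1 \<Longrightarrow> LM_mult M (A,x) (B, y) = (kmult A B, inv\<^bsub>M\<^esub> x \<otimes>\<^bsub>M\<^esub> y)"
  by (simp add: LM_mult_def)

lemma kmult_cancel1: "kmult A (kmult A B) = B"
  by (cases A; cases B; simp)

lemma kmult_cancel2: "kmult (kmult B A) A = B"
  by (cases A; cases B; simp)

lemma kmult_K1_iff: "kmult A B = K1 \<longleftrightarrow> A = B"
  by (cases A; cases B; simp)

lemma klein_UNIV: "(UNIV :: klein set) = {K1,Ka,Kb,Kc}"
  using klein.exhaust by blast

lemma finite_klein: "finite (UNIV :: klein set)"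
  unfolding klein_UNIV by simp

lemma card_klein: "card (UNIV :: klein set) = 4"
  unfolding klein_UNIV by simp

context comm_group
begin

lemma sq_one:
  assumes "x \<in> carrier G" "odd (order G)" "x \<otimes> x = \<one>"
  shows "x = \<one>"
proof -
  obtain k where k: "order G = 2*k+1" using assms(2) oddE by blast
  have "x [^] (2::nat) = \<one>" using assms by (simp add: numeral_2_eq_2)
  hence "x [^] (2*k) = \<one>" by (metis nat_pow_pow assms(1) nat_pow_one)
  moreover have "x [^] order G = \<one>" using pow_order_eq_1 assms(1) .
  ultimately show ?thesis using k assms(1) by (simp add: nat_pow_Suc)
qed

lemma main:
  assumes sl: "LM_subloop G H" and c4: "card H = 4" and fin: "finite (carrier G)"
    and od: "odd (order G)"
  shows "H = UNIV \<times> {\<one>}"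
proof -
  have sub: "H \<subseteq> UNIV \<times> carrier G" and one: "(K1, \<one>) \<in> H"
    and cl: "\<And>x y. x \<in> H \<Longrightarrow> y \<in> H \<Longrightarrow> LM_mult G x y \<in> H"
    and ld: "\<And>x y. x \<in> H \<Longrightarrow> y \<in> H \<Longrightarrow> \<exists>z\<in>H. LM_mult G x z = y"
    using sl unfolding LM_subloop_def LM_carrier_def by auto
  have finH: "finite H" using c4 by (metis card.infinite zero_neq_numeral)
  define N where "N = {n. (K1, n) \<in> H}"
  have Nc: "N \<subseteq> carrier G" using sub N_def by auto
  have fib: "{y. (A, y) \<in> H} = (\<lambda>n. x \<otimes> n) ` N" if Ax0: "(A, x) \<in> H" for A x
  proof
    show "{y. (A, y) \<in> H} \<subseteq> (\<lambda>n. x \<otimes> n) ` N"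
    proof
      fix y assume "y \<in> {y. (A, y) \<in> H}"
      hence yH: "(A,y) \<in> H" by simp
      obtain z where z: "z \<in> H" "LM_mult G (A,x) z = (A,y)" using ld[OF Ax0 yH] by blast
      obtain B w where zz: "z = (B,w)" by fastforce
      have "B = K1"
      proof (rule ccontr)
        assume "B \<noteq> K1"
        hence "kmult A B = A" using z zz by (simp add: LM_mult_def)
        thus False using \<open>B \<noteq> K1\<close> kmult_eq_left by blast
      qed
      thus "y \<in> (\<lambda>n. x \<otimes> n) ` N" using z zz N_def LM_mult_K1[of G "(A,x)" w] by auto
    qed
  next
    show "(\<lambda>n. x \<otimes> n) ` N \<subseteq> {y. (A, y) \<in> H}"
      using cl[OF Ax0] LM_mult_K1[of G "(A,x)"] N_def by fastforce
  qed
  have xc: "x \<in> carrier G" if "(A,x) \<in> H" for A x using sub that by auto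
  have cardfib: "card {y. (A, y) \<in> H} = card N" if "(A, x) \<in> H" for A x
  proof -
    have "inj_on (\<lambda>n. x \<otimes> n) N" using xc[OF that] Nc
      by (meson inj_on_def l_cancel subsetD)
    thus ?thesis using fib[OF that] by (simp add: card_image)
  qed
  have subN: "subgroup N G"
  proof (rule subgroupI)
    show "N \<subseteq> carrier G" by fact
    show "N \<noteq> {}" using one N_def by auto
  next
    fix a assume a: "a \<in> N"
    hence aH: "(K1,a) \<in> H" using N_def by simp
    obtain z where z: "z \<in> H" "LM_mult G (K1,a) z = (K1,\<one>)" using ld[OF aH one] by blast
    obtain B w where zz: "z = (B,w)" by fastforce
    have "B = K1" using z zz by (simp add: LM_mult_def split: if_splits)
    hence "a \<otimes> w = \<one>" "w \<in> N" using z zz N_def LM_mult_K1[of G "(K1,a)" w] by auto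
    moreover have "w \<in> carrier G" "a \<in> carrier G" using \<open>w \<in> N\<close> a Nc by auto
    ultimately show "inv a \<in> N" by (metis inv_equality m_comm)
  next
    fix a b assume "a \<in> N" "b \<in> N"
    thus "a \<otimes> b \<in> N" using cl[of "(K1,a)" "(K1,b)"] N_def LM_mult_K1[of G "(K1,a)" b] by auto
  qed
  have oddN: "odd (card N)"
    using lagrange[OF subN] od by (metis dvd_triv_right even_mult_iff)
  have finN: "finite N" using Nc fin finite_subset by blast
  have cN: "card N = 1"
  proof (cases "\<exists>A x. (A,x) \<in> H \<and> A \<noteq> K1")
    case True
    then obtain A x where Ax: "(A,x) \<in> H" "A \<noteq> K1" by blast
    have "{K1} \<times> N \<union> {A} \<times> {y. (A, y) \<in> H} \<subseteq> H" using N_def by auto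
    hence "card ({K1} \<times> N \<union> {A} \<times> {y. (A, y) \<in> H}) \<le> 4" using c4 finH card_mono by metis
    moreover have "card ({K1} \<times> N \<union> {A} \<times> {y. (A, y) \<in> H}) = card N + card N"
    proof -
      have f2: "finite {y. (A, y) \<in> H}" using fib[OF Ax(1)] finN by simp
      have "card ({K1} \<times> N \<union> {A} \<times> {y. (A, y) \<in> H}) = card ({K1} \<times> N) + card ({A} \<times> {y. (A, y) \<in> H})"
        by (rule card_Un_disjoint) (use finN f2 Ax(2) in auto)
      thus ?thesis using cardfib[OF Ax(1)] by (simp add: card_cartesian_product)
    qed
    ultimately have "card N \<le> 2" by simp
    moreover have "card N \<noteq> 0" using oddN by presburger
    ultimately show ?thesis using oddN
      by (metis One_nat_def Suc_1 dvd_refl le_Suc_eq le_zero_eq)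
  next
    case False
    hence "H = {K1} \<times> N" using N_def by auto
    hence "card N = 4" using c4 by (simp add: card_cartesian_product)
    thus ?thesis using oddN by simp
  qed
  have Nsing: "N = {\<one>}" using cN one N_def by (metis card_1_singletonE singletonD mem_Collect_eq)
  have uniq: "y = x" if "(A,x) \<in> H" "(A,y) \<in> H" for A x y
    using fib[OF that(1)] Nsing xc[OF that(1)] that(2) by auto
  have inj: "inj_on fst H" using uniq by (force simp: inj_on_def)
  have "card (fst ` H) = 4" using card_image[OF inj] c4 by simp
  moreover have "card (UNIV :: klein set) = 4"
  proof -
    show ?thesis by (rule card_klein)
  qed
  ultimately have surj: "fst ` H = UNIV"
    using card_subset_eq[OF finite_klein subset_UNIV, of "fst ` H"] by simp
  have ex: "\<exists>x. (A,x) \<in> H" for A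
  proof -
    have "A \<in> fst ` H" using surj by simp
    then obtain p where "p \<in> H" "A = fst p" by blast
    thus ?thesis by (intro exI[of _ "snd p"]) simp
  qed
  obtain xa where xa: "(Ka,xa) \<in> H" using ex[of Ka] by blast
  obtain xb where xb: "(Kb,xb) \<in> H" using ex[of Kb] by blast
  obtain xc where xcc: "(Kc,xc) \<in> H" using ex[of Kc] by blast
  have ca: "xa \<in> carrier G" "xb \<in> carrier G" "xc \<in> carrier G" using xa xb xcc xc by auto
  have e1: "xc = inv xa \<otimes> xb" using uniq[OF xcc] cl[OF xa xb] by (simp add: LM_mult_nK1)
  have e2: "xc = inv xb \<otimes> xa" using uniq[OF xcc] cl[OF xb xa] by (simp add: LM_mult_nK1)
  have e3: "xb = inv xa \<otimes> xc" using uniq[OF xb] cl[OF xa xcc] by (simp add: LM_mult_nK1)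
  have "xb \<otimes> (inv xb \<otimes> xa) = (xb \<otimes> inv xb) \<otimes> xa"
    using ca by (intro m_assoc[symmetric]) auto
  also have "\<dots> = xa" using ca by simp
  finally have h: "xb \<otimes> (inv xb \<otimes> xa) = xa" .
  have "(inv xb \<otimes> xa) \<otimes> (inv xb \<otimes> xa) = \<one>"
  proof -
    have "inv xa \<otimes> xb \<otimes> (inv xb \<otimes> xa) = inv xa \<otimes> (xb \<otimes> (inv xb \<otimes> xa))"
      using ca by (intro m_assoc) auto
    also have "\<dots> = \<one>" using ca h by simp
    finally have "inv xa \<otimes> xb \<otimes> (inv xb \<otimes> xa) = \<one>" .
    thus ?thesis using e1 e2 by simp
  qed
  note sq1 = this
  have q: "inv xb \<otimes> xa = \<one>" by (rule sq_one[OF _ od]) (use ca sq1 in auto)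
  have abeq: "xa = xb" using h q ca by simp
  hence "xc = \<one>" using e1 ca by simp
  hence xbi: "xb = inv xa" using e3 ca by simp
  have xai: "xa = inv xa" using abeq xbi by (rule trans)
  have "xa \<otimes> xa = xa \<otimes> inv xa" using arg_cong[OF xai, of "\<lambda>t. xa \<otimes> t"] by simp
  hence "xa \<otimes> xa = \<one>" using ca by simp
  note sq2 = this
  have xa1: "xa = \<one>" by (rule sq_one[OF _ od]) (use ca sq2 in auto)
  hence xb1: "xb = \<one>" using abeq by simp
  have allA: "(A, \<one>) \<in> H" for A
    using one xa xb xcc xa1 xb1 \<open>xc = \<one>\<close> by (cases A) simp_all
  show ?thesis
  proof
    show "H \<subseteq> UNIV \<times> {\<one>}"
    proof
      fix p assume pH: "p \<in> H"
      obtain A x where p: "p = (A,x)" by fastforce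
      have "x = \<one>" using uniq[OF allA[of A]] pH p by simp
      thus "p \<in> UNIV \<times> {\<one>}" using p by simp
    qed
    show "UNIV \<times> {\<one>} \<subseteq> H" using allA by auto
  qed
qed

lemma triv_subloop: "LM_subloop G (UNIV \<times> {\<one>})"
  unfolding LM_subloop_def LM_carrier_def
proof (intro conjI ballI)
  fix x y assume "x \<in> (UNIV::klein set) \<times> {\<one>}" "y \<in> (UNIV::klein set) \<times> {\<one>}"
  thus "LM_mult G x y \<in> UNIV \<times> {\<one>}" by (auto simp: LM_mult_def)
next
  fix x y :: "klein \<times> 'a" assume "x \<in> UNIV \<times> {\<one>}" "y \<in> UNIV \<times> {\<one>}"
  then obtain A B where xy: "x = (A, \<one>)" "y = (B, \<one>)" by auto
  have "LM_mult G (A, \<one>) (kmult A B, \<one>) = (B, \<one>)"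
    by (simp add: LM_mult_def kmult_cancel1 kmult_K1_iff)
  thus "\<exists>z\<in>UNIV \<times> {\<one>}. LM_mult G x z = y" using xy by blast
next
  fix x y :: "klein \<times> 'a" assume "x \<in> UNIV \<times> {\<one>}" "y \<in> UNIV \<times> {\<one>}"
  then obtain A B where xy: "x = (A, \<one>)" "y = (B, \<one>)" by auto
  have "LM_mult G (kmult B A, \<one>) (A, \<one>) = (B, \<one>)"
    by (simp add: LM_mult_def kmult_cancel2 kmult_K1_iff)
  thus "\<exists>z\<in>UNIV \<times> {\<one>}. LM_mult G z x = y" using xy by blast
qed auto

end

theorem corollary4p5:
  fixes M :: "('a, 'b) monoid_scheme"
  assumes "comm_group M"
    and "finite (carrier M)"
    and "odd (order M)"
    and "group_exponent M > 2"
  shows "{H. LM_subloop M H \<and> card H = 4} = {UNIV \<times> {\<one>\<^bsub>M\<^esub>}}"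
proof -
  interpret comm_group M by fact
  have "card ((UNIV::klein set) \<times> {\<one>\<^bsub>M\<^esub>}) = 4"
  proof -
    show ?thesis by (simp add: card_cartesian_product card_klein)
  qed
  thus ?thesis using main[OF _ _ assms(2,3)] triv_subloop by blast
qed

end
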